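(* Let $n$ be a positive integer. If $\Phi(n)^{\Phi(n)}\equiv 1\pmod n$ or $\Lambda(n)^{\Lambda(n)}\equiv 1 \pmod n$, then $n$ is $G$-cyclic.
   Context: For a positive integer $n$, $\mathcal{G}_n=\{a+bi\in\mathbb{Z}[i]/n\mathbb{Z}[i] : a^2+b^2\equiv 1\pmod n\}$ (a multiplicative group), $\Phi(n)=|\mathcal{G}_n|$, and $\Lambda(n)$ is the exponent of $\mathcal{G}_n$. An integer $n\ge 1$ is $G$-cyclic if $\gcd(\Phi(n),n)=1$. *)

theory Defs
  imports "HOL-Number_Theory.Number_Theory"
begin

text \<open>Elements of Z[i]/nZ[i] are represented by pairs (a,b) of residues
  a,b in {0..<n}, standing for a + b i.\<close>

definition gmul :: "int \<Rightarrow> int \<times> int \<Rightarrow> int \<times> int \<Rightarrow> int \<times> int" where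
  "gmul n x y = ((fst x * fst y - snd x * snd y) mod n,
                 (fst x * snd y + snd x * fst y) mod n)"

definition gone :: "int \<Rightarrow> int \<times> int" where
  "gone n = (1 mod n, 0)"

fun gpow :: "int \<Rightarrow> int \<times> int \<Rightarrow> nat \<Rightarrow> int \<times> int" where
  "gpow n x 0 = gone n"
| "gpow n x (Suc k) = gmul n x (gpow n x k)"

definition Gn :: "nat \<Rightarrow> (int \<times> int) set" where
  "Gn n = {(a, b). 0 \<le> a \<and> a < int n \<and> 0 \<le> b \<and> b < int n \<and>
                   [a^2 + b^2 = 1] (mod int n)}"

definition Phi :: "nat \<Rightarrow> nat" where
  "Phi n = card (Gn n)"

definition Lambda :: "nat \<Rightarrow> nat" where
  "Lambda n = (LEAST k. 0 < k \<and> (\<forall>g\<in>Gn n. gpow (int n) g k = gone (int n)))"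

definition G_cyclic :: "nat \<Rightarrow> bool" where
  "G_cyclic n \<longleftrightarrow> 1 \<le> n \<and> gcd (Phi n) n = 1"

end

theory Submission
  imports Defs "HOL-Algebra.Sylow" "HOL-Algebra.Multiplicative_Group"
begin

definition GG :: "nat \<Rightarrow> (int \<times> int) monoid" where
  "GG n = \<lparr>carrier = Gn n, mult = gmul (int n), one = gone (int n)\<rparr>"

lemma norm_mod:
  fixes u v m :: int
  shows "[(u mod m)^2 + (v mod m)^2 = u^2 + v^2] (mod m)"
  by (intro cong_add cong_pow) (auto simp: cong_def)

lemma L1: "((p::int)*(q mod m) - r*(s mod m)) mod m = (p*q - r*s) mod m"
  by (metis mod_diff_eq mod_mult_right_eq)
lemma L2: "((p::int)*(q mod m) + r*(s mod m)) mod m = (p*q + r*s) mod m"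
  by (metis mod_add_eq mod_mult_right_eq)
lemma L3: "((p::int) - r*(s mod m)) mod m = (p - r*s) mod m"
  by (metis mod_diff_eq mod_mult_right_eq)
lemma L4: "((p::int) + r*(s mod m)) mod m = (p + r*s) mod m"
  by (metis mod_add_eq mod_mult_right_eq)

lemma gmul_closed:
  assumes "0 < n" "x \<in> Gn n" "y \<in> Gn n"
  shows "gmul (int n) x y \<in> Gn n"
proof -
  obtain a b where x: "x = (a,b)" by (cases x)
  obtain c d where y: "y = (c,d)" by (cases y)
  have h1: "[a^2+b^2 = 1] (mod int n)" "[c^2+d^2 = 1] (mod int n)"
    using assms x y by (auto simp: Gn_def)
  have e: "(a*c-b*d)^2 + (a*d+b*c)^2 = (a^2+b^2)*(c^2+d^2)" by (simp add: power2_eq_square algebra_simps)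
  have "[(a^2+b^2)*(c^2+d^2) = 1*1] (mod int n)" using h1 by (intro cong_mult)
  then have c1: "[(a*c-b*d)^2 + (a*d+b*c)^2 = 1] (mod int n)" unfolding e by simp
  have c: "[((a*c-b*d) mod int n)^2 + ((a*d+b*c) mod int n)^2 = 1] (mod int n)"
    by (rule cong_trans[OF norm_mod c1])
  have r: "0 \<le> (a*c-b*d) mod int n" "(a*c-b*d) mod int n < int n"
     "0 \<le> (a*d+b*c) mod int n" "(a*d+b*c) mod int n < int n" using assms(1) by auto
  have g: "gmul (int n) x y = ((a*c-b*d) mod int n, (a*d+b*c) mod int n)"
    by (simp add: gmul_def x y)
  show ?thesis unfolding g Gn_def using r c by blast
qed

lemma gmul_assoc:
  "gmul m (gmul m x y) z = gmul m x (gmul m y z)"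
proof -
  obtain a b where x: "x = (a,b)" by (cases x)
  obtain c d where y: "y = (c,d)" by (cases y)
  obtain e f where z: "z = (e,f)" by (cases z)
  have 1: "(((a*c - b*d) mod m)*e - ((a*d+b*c) mod m)*f) mod m = ((a*c - b*d)*e - (a*d+b*c)*f) mod m"
    using L1[of e "a*c - b*d" m f "a*d+b*c"] by (simp add: mult.commute)
  have 2: "(a*((c*e - d*f) mod m) - b*((c*f+d*e) mod m)) mod m = (a*(c*e - d*f) - b*(c*f+d*e)) mod m"
    by (rule L1)
  have 3: "(((a*c - b*d) mod m)*f + ((a*d+b*c) mod m)*e) mod m = ((a*c - b*d)*f + (a*d+b*c)*e) mod m"
    using L2[of f "a*c - b*d" m e "a*d+b*c"] by (simp add: mult.commute)
  have 4: "(a*((c*f + d*e) mod m) + b*((c*e-d*f) mod m)) mod m = (a*(c*f + d*e) + b*(c*e-d*f)) mod m"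
    by (rule L2)
  have r1: "(a*c - b*d)*e - (a*d+b*c)*f = a*(c*e - d*f) - b*(c*f+d*e)" by (simp add: algebra_simps)
  have r2: "(a*c - b*d)*f + (a*d+b*c)*e = a*(c*f + d*e) + b*(c*e-d*f)" by (simp add: algebra_simps)
  show ?thesis unfolding x y z gmul_def fst_conv snd_conv using 1 2 3 4 r1 r2 by simp
qed

lemma gmul_comm:
  "gmul m x y = gmul m y x"
  by (cases x, cases y) (simp add: gmul_def algebra_simps)

lemma gone_in: "0 < n \<Longrightarrow> gone (int n) \<in> Gn n"
  by (simp add: Gn_def gone_def cong_def power_mod)

lemma gone_l: "x \<in> Gn n \<Longrightarrow> gmul (int n) (gone (int n)) x = x"
  by (cases x) (simp add: Gn_def gmul_def gone_def mod_simps)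

lemma inv_ex:
  assumes "0 < n" "x \<in> Gn n"
  shows "\<exists>y\<in>Gn n. gmul (int n) y x = gone (int n)"
proof -
  obtain a b where x: "x = (a,b)" by (cases x)
  have h: "0 \<le> a" "a < int n" "0 \<le> b" "b < int n" "[a^2+b^2 = 1] (mod int n)"
    using assms x by (auto simp: Gn_def)
  have "[a^2 + ((-b) mod int n)^2 = a^2 + (-b)^2] (mod int n)"
    using norm_mod[of a "int n" "-b"] h by simp
  then have "[a^2 + ((-b) mod int n)^2 = 1] (mod int n)" using h(5) by (simp add: cong_trans)
  then have y: "(a, (-b) mod int n) \<in> Gn n" using h assms by (simp add: Gn_def)
  have e1: "(a * a - ((-b) mod int n) * b) mod int n = (a*a - (-b)*b) mod int n"
    using L3[of "a*a" b "-b" "int n"] by (simp add: mult.commute)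
  have e2: "(a * b + ((-b) mod int n) * a) mod int n = 0"
  proof -
    have "(a * b + ((-b) mod int n) * a) mod int n = (a*b + a*((-b) mod int n)) mod int n"
      by (simp add: mult.commute)
    also have "\<dots> = (a*b + a*(-b)) mod int n" by (rule L4)
    finally show ?thesis by simp
  qed
  have "gmul (int n) (a, (-b) mod int n) x = ((a^2+b^2) mod int n, 0)"
    using e1 e2 by (simp add: x gmul_def power2_eq_square)
  also have "\<dots> = gone (int n)" using h(5) by (simp add: gone_def cong_def)
  finally show ?thesis using y by blast
qed

lemma GG_group: "0 < n \<Longrightarrow> group (GG n)"
proof (rule groupI)
  assume n: "0 < n"
  show "\<And>x y. x \<in> carrier (GG n) \<Longrightarrow> y \<in> carrier (GG n) \<Longrightarrow> x \<otimes>\<^bsub>GG n\<^esub> y \<in> carrier (GG n)"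
    unfolding GG_def using gmul_closed[OF n] by simp
  show "\<one>\<^bsub>GG n\<^esub> \<in> carrier (GG n)" unfolding GG_def using gone_in[OF n] by simp
  show "\<And>x y z. x \<otimes>\<^bsub>GG n\<^esub> y \<otimes>\<^bsub>GG n\<^esub> z = x \<otimes>\<^bsub>GG n\<^esub> (y \<otimes>\<^bsub>GG n\<^esub> z)"
    unfolding GG_def by (simp only: monoid.simps gmul_assoc)
  show "\<And>x. x \<in> carrier (GG n) \<Longrightarrow> \<one>\<^bsub>GG n\<^esub> \<otimes>\<^bsub>GG n\<^esub> x = x"
    unfolding GG_def using gone_l by simp
  show "\<And>x. x \<in> carrier (GG n) \<Longrightarrow> \<exists>y\<in>carrier (GG n). y \<otimes>\<^bsub>GG n\<^esub> x = \<one>\<^bsub>GG n\<^esub>"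
    unfolding GG_def using inv_ex[OF n] by simp
qed

lemma finite_Gn: "finite (Gn n)"
proof -
  have "Gn n \<subseteq> {0..<int n} \<times> {0..<int n}" by (auto simp: Gn_def)
  then show ?thesis by (rule finite_subset) auto
qed

lemma GG_pow: "x [^]\<^bsub>GG n\<^esub> k = gpow (int n) x k"
proof (induction k)
  case 0
  then show ?case by (simp add: GG_def)
next
  case (Suc k)
  have "x [^]\<^bsub>GG n\<^esub> Suc k = gmul (int n) (x [^]\<^bsub>GG n\<^esub> k) x"
    by (simp add: GG_def)
  also have "\<dots> = gmul (int n) x (gpow (int n) x k)" using Suc by (metis gmul_comm)
  finally show ?case by simp
qed

lemma Phi_pos: "0 < n \<Longrightarrow> 0 < Phi n"
proof -
  assume "0 < n"
  then have "gone (int n) \<in> Gn n" by (rule gone_in)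
  then show ?thesis unfolding Phi_def using finite_Gn card_gt_0_iff by blast
qed

lemma order_GG: "order (GG n) = Phi n"
  by (simp add: order_def GG_def Phi_def)

lemma Lambda_props:
  assumes n: "0 < n"
  shows "0 < Lambda n \<and> (\<forall>g\<in>Gn n. gpow (int n) g (Lambda n) = gone (int n))"
proof -
  interpret G: group "GG n" using GG_group[OF n] .
  have "0 < Phi n \<and> (\<forall>g\<in>Gn n. gpow (int n) g (Phi n) = gone (int n))"
  proof (intro conjI ballI)
    show "0 < Phi n" using Phi_pos[OF n] .
    fix g assume g: "g \<in> Gn n"
    have "g [^]\<^bsub>GG n\<^esub> order (GG n) = \<one>\<^bsub>GG n\<^esub>"
      by (rule G.pow_order_eq_1) (use g in \<open>simp add: GG_def\<close>)
    then show "gpow (int n) g (Phi n) = gone (int n)"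
      by (simp add: GG_pow order_GG, simp add: GG_def)
  qed
  then show ?thesis unfolding Lambda_def by (rule LeastI)
qed

lemma key:
  assumes n: "0 < n" and p: "prime p" and d: "p dvd Phi n"
  shows "p dvd Lambda n"
proof -
  interpret G: group "GG n" using GG_group[OF n] .
  obtain m where m: "Phi n = p * m" using d by blast
  have "order (GG n) = p ^ 1 * m" using m order_GG by simp
  moreover have "finite (carrier (GG n))" by (simp add: GG_def finite_Gn)
  ultimately obtain H where H: "subgroup H (GG n)" "card H = p ^ 1"
    using sylow_thm[OF p G.is_group] by blast
  have "card H > 1" using H(2) p prime_gt_1_nat by simp
  then obtain h where h: "h \<in> H" "h \<noteq> \<one>\<^bsub>GG n\<^esub>"
  proof -
    have "\<not> H \<subseteq> {\<one>\<^bsub>GG n\<^esub>}"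
    proof
      assume "H \<subseteq> {\<one>\<^bsub>GG n\<^esub>}"
      then have "card H \<le> 1" using card_mono[of "{\<one>\<^bsub>GG n\<^esub>}" H] by simp
      then show False using \<open>card H > 1\<close> by simp
    qed
    then show ?thesis using that by blast
  qed
  have hc: "h \<in> carrier (GG n)" using H(1) h(1) subgroup.subset by blast
  interpret S: group "GG n\<lparr>carrier := H\<rparr>" using subgroup.subgroup_is_group[OF H(1) G.is_group] .
  have "h [^]\<^bsub>GG n\<lparr>carrier := H\<rparr>\<^esub> order (GG n\<lparr>carrier := H\<rparr>) = \<one>\<^bsub>GG n\<lparr>carrier := H\<rparr>\<^esub>"
    by (rule S.pow_order_eq_1) (use h in simp)
  then have hp: "h [^]\<^bsub>GG n\<^esub> p = \<one>\<^bsub>GG n\<^esub>"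
    using H(2) by (simp add: order_def G.nat_pow_consistent[symmetric])
  have "h \<in> Gn n" using hc by (simp add: GG_def)
  then have hl: "h [^]\<^bsub>GG n\<^esub> Lambda n = \<one>\<^bsub>GG n\<^esub>"
    using Lambda_props[OF n] by (simp add: GG_pow, simp add: GG_def)
  have o1: "G.ord h dvd p" using hp G.pow_eq_id[OF hc] by simp
  have o2: "G.ord h dvd Lambda n" using hl G.pow_eq_id[OF hc] by simp
  have "G.ord h \<noteq> 1" using G.ord_eq_1[OF hc] h(2) by simp
  moreover have "\<forall>m. m dvd p \<longrightarrow> m = 1 \<or> m = p" using p by (simp add: prime_nat_iff)
  ultimately have "G.ord h = p" using o1 by blast
  then show ?thesis using o2 by simp
qed

theorem mainTheorem13:
  fixes n :: nat
  assumes "0 < n"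
    and "[Phi n ^ Phi n = 1] (mod n) \<or> [Lambda n ^ Lambda n = 1] (mod n)"
  shows "G_cyclic n"
proof -
  have cop: "coprime a n" if h: "[a ^ a = 1] (mod n)" and a: "0 < a" for a :: nat
  proof -
    have "[1 = a ^ a] (mod n)" using h by (rule cong_sym)
    moreover have "coprime (1::nat) n" by (rule coprime_1_left)
    ultimately have "coprime (a ^ a) n" by (rule cong_imp_coprime)
    then have "coprime a n \<or> a = 0" by (rule coprime_power_left_iff[THEN iffD1])
    then show ?thesis using a by auto
  qed
  have "coprime (Phi n) n"
    using assms(2)
  proof
    assume "[Phi n ^ Phi n = 1] (mod n)"
    then show ?thesis using Phi_pos[OF assms(1)] by (rule cop)
  next
    assume "[Lambda n ^ Lambda n = 1] (mod n)"
    moreover have "0 < Lambda n" using Lambda_props[OF assms(1)] by (rule conjunct1)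
    ultimately have cl: "coprime (Lambda n) n" by (rule cop)
    show ?thesis
    proof (rule ccontr)
      assume "\<not> coprime (Phi n) n"
      then have "gcd (Phi n) n \<noteq> 1" using coprime_iff_gcd_eq_1 by blast
      then obtain p where p: "prime p" "p dvd gcd (Phi n) n" using prime_factor_nat by blast
      have pp: "p dvd Phi n" by (rule dvd_trans[OF p(2) gcd_dvd1])
      have pn: "p dvd n" by (rule dvd_trans[OF p(2) gcd_dvd2])
      have "p dvd Lambda n" by (rule key[OF assms(1) p(1) pp])
      then have "p dvd gcd (Lambda n) n" using pn by (rule gcd_greatest)
      moreover have "gcd (Lambda n) n = 1" using cl by (simp only: coprime_iff_gcd_eq_1)
      ultimately have "p dvd 1" by (simp only:)
      then have "p = 1" by (simp only: nat_dvd_1_iff_1)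
      then show False using p(1) not_prime_1 by blast
    qed
  qed
  then have "gcd (Phi n) n = 1" by (simp only: coprime_iff_gcd_eq_1)
  moreover have "1 \<le> n" using assms(1) by linarith
  ultimately show ?thesis unfolding G_cyclic_def by blast
qed

end
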